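(* For $k\ge4$ and $d\in[d_{\mathrm{lbd}}(k),d_{\mathrm{ubd}}(k)]$, $|\Psi_d'(x)|<1$ for all $x\in[\frac12-\frac1{2^k},\frac12]$.
   Context: $\hat\Psi(x)=\frac{1-2x^{k-1}}{1-x^{k-1}}$, $\dot\Psi(v)=\frac{1-v^{d-1}}{2-v^{d-1}}$, $\Psi_d=\dot\Psi\circ\hat\Psi$ ($d$ real). $d_{\mathrm{lbd}}(4)=16.7$, $d_{\mathrm{lbd}}(k)=(2^{k-1}-2)k\log2$ for $k\ge5$; $d_{\mathrm{ubd}}(k)=2^{k-1}k\log2$. *)

theory Defs
  imports "HOL-Analysis.Analysis"
begin

definition Psi_hat :: "nat \<Rightarrow> real \<Rightarrow> real" where
  "Psi_hat k x = (1 - 2 * x ^ (k - 1)) / (1 - x ^ (k - 1))"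

text \<open>d is real, so v^(d-1) is the real power; on the relevant range v > 0.\<close>
definition Psi_dot :: "real \<Rightarrow> real \<Rightarrow> real" where
  "Psi_dot d v = (1 - v powr (d - 1)) / (2 - v powr (d - 1))"

definition Psi :: "nat \<Rightarrow> real \<Rightarrow> real \<Rightarrow> real" where
  "Psi k d = Psi_dot d \<circ> Psi_hat k"

definition d_lbd :: "nat \<Rightarrow> real" where
  "d_lbd k = (if k = 4 then 16.7 else (2 ^ (k - 1) - 2) * real k * ln 2)"

definition d_ubd :: "nat \<Rightarrow> real" where
  "d_ubd k = 2 ^ (k - 1) * real k * ln 2"

end

theory Submission
  imports Defs
begin

lemma Psi_hat_deriv:
  fixes x :: real
  assumes "x ^ (k-1) \<noteq> 1"
  shows "(Psi_hat k has_real_derivative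
           - (real (k-1) * x ^ (k-1-1)) / (1 - x^(k-1))^2) (at x)"
proof -
  let ?n = "k-1"
  have h1: "((\<lambda>x. 1 - 2 * x ^ ?n) has_real_derivative (- (2 * (real ?n * x^(?n-1))))) (at x)"
    by (auto intro!: derivative_eq_intros)
  have h2: "((\<lambda>x. 1 - x ^ ?n) has_real_derivative (- (real ?n * x^(?n-1)))) (at x)"
    by (auto intro!: derivative_eq_intros)
  have ne: "1 - x ^ ?n \<noteq> 0" using assms by simp
  have "(Psi_hat k has_real_derivative
     ((- (2 * (real ?n * x^(?n-1)))) * (1 - x^?n) - (- (real ?n * x^(?n-1))) * (1 - 2 * x^?n)) / (1 - x^?n) ^ Suc (Suc 0)) (at x)"
    unfolding Psi_hat_def[abs_def] by (rule DERIV_quotient[OF h1 h2 ne])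
  moreover have "((- (2 * (real ?n * x^(?n-1)))) * (1 - x^?n) - (- (real ?n * x^(?n-1))) * (1 - 2 * x^?n)) / (1 - x^?n) ^ Suc (Suc 0)
     = - (real ?n * x ^ (?n-1)) / (1 - x^?n)^2"
    by (simp add: power2_eq_square algebra_simps)
  ultimately show ?thesis by simp
qed

lemma Psi_dot_deriv:
  fixes v d :: real
  assumes "0 < v" "v < 1" "1 \<le> d"
  shows "(Psi_dot d has_real_derivative
           - ((d-1) * v powr (d-1-1)) / (2 - v powr (d-1))^2) (at v)"
proof -
  have p: "((\<lambda>v. v powr (d-1)) has_real_derivative (d-1) * v powr (d-1-1)) (at v)"
    by (rule has_real_derivative_powr[OF assms(1)])
  have h1: "((\<lambda>v. 1 - v powr (d-1)) has_real_derivative - ((d-1) * v powr (d-1-1))) (at v)"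
    using DERIV_diff[OF DERIV_const p] by simp
  have h2: "((\<lambda>v. 2 - v powr (d-1)) has_real_derivative - ((d-1) * v powr (d-1-1))) (at v)"
    using DERIV_diff[OF DERIV_const p] by simp
  have "v powr (d-1) \<noteq> 2"
  proof -
    have "v powr (d-1) \<le> 1" using assms by (intro powr_le1) auto
    then show ?thesis by simp
  qed
  then have ne: "2 - v powr (d-1) \<noteq> 0" by simp
  have "(Psi_dot d has_real_derivative
     ((- ((d-1) * v powr (d-1-1))) * (2 - v powr (d-1)) - (- ((d-1) * v powr (d-1-1))) * (1 - v powr (d-1))) / (2 - v powr (d-1)) ^ Suc (Suc 0)) (at v)"
    unfolding Psi_dot_def[abs_def] by (rule DERIV_quotient[OF h1 h2 ne])
  moreover have "((- ((d-1) * v powr (d-1-1))) * (2 - v powr (d-1)) - (- ((d-1) * v powr (d-1-1))) * (1 - v powr (d-1))) / (2 - v powr (d-1)) ^ Suc (Suc 0)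
     = - ((d-1) * v powr (d-1-1)) / (2 - v powr (d-1))^2"
    by (simp add: power2_eq_square algebra_simps)
  ultimately show ?thesis by simp
qed

lemma core_bound:
  fixes n :: nat and a b x r v D D0 :: real
  assumes n1: "n \<ge> 1" and a0: "0 < a" and ax: "a \<le> x" and xb: "x \<le> b"
    and bn: "b ^ n < 1/2"
    and ar: "(1 - 2 * a^n) / (1 - a^n) \<le> r" and r1: "r < 1"
    and D01: "1 \<le> D0" and DD0: "D0 \<le> D" and rD0: "1 / D0 \<le> 1 - r"
    and vdef: "v = (1 - 2 * x^n) / (1 - x^n)"
  shows "0 < v \<and> v < 1 \<and>
    D * v powr (D-1) * (real n * x^(n-1)) / ((2 - v powr D)^2 * (1-x^n)^2)
    \<le> D0 * r powr (D0-1) * (real n * b^(n-1)) / ((2 - r powr D0)^2 * (1-b^n)^2)"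
proof -
  have x0: "0 < x" using a0 ax by simp
  have ya: "a^n \<le> x^n" using ax a0 by (simp add: power_mono)
  have yb: "x^n \<le> b^n" using xb x0 by (simp add: power_mono)
  have y0: "0 < x^n" using x0 by simp
  have a0n: "0 < a^n" using a0 by simp
  have veq: "v = 2 - 1 / (1 - x^n)" using vdef yb bn by (simp add: field_simps)
  have vaeq: "(1 - 2 * a^n) / (1 - a^n) = 2 - 1 / (1 - a^n)" using ya yb bn by (simp add: field_simps)
  have "1 / (1 - x^n) < 2" using yb bn by (simp add: field_simps)
  then have v0: "0 < v" using veq by simp
  have "1 / (1 - x^n) > 1" using yb bn y0 by (simp add: field_simps)
  then have v1: "v < 1" using veq by simp
  have "1 / (1 - a^n) \<le> 1 / (1 - x^n)"
    using ya yb bn by (intro divide_left_mono) auto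
  then have vr: "v \<le> r" using veq vaeq ar by simp
  have r0: "0 < r" using v0 vr by simp
  have D0pos: "0 < D0" using D01 by simp
  have Dpos: "0 < D" using D01 DD0 by simp
  have split: "v powr (D-1) = v powr (D0-1) * v powr (D-D0)"
    using v0 by (simp add: powr_add[symmetric])
  have lnv: "ln v \<le> - (1/D0)" using ln_le_minus_one[OF v0] vr rD0 by simp
  have "(D-D0) * ln v \<le> (D-D0) * (- (1/D0))"
    using lnv DD0 by (intro mult_left_mono) auto
  then have e1: "v powr (D-D0) \<le> exp (- ((D-D0)/D0))"
    using v0 by (simp add: powr_def)
  have "1 + (D-D0)/D0 \<le> exp ((D-D0)/D0)" by (rule exp_ge_add_one_self)
  then have "exp (- ((D-D0)/D0)) \<le> 1 / (1 + (D-D0)/D0)"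
    using DD0 D0pos by (simp add: exp_minus field_simps)
  also have "\<dots> = D0 / D" using D0pos Dpos by (simp add: field_simps)
  finally have "v powr (D-D0) \<le> D0 / D" using e1 by simp
  then have key: "D * v powr (D-D0) \<le> D0" using Dpos by (simp add: field_simps)
  have "D * v powr (D-1) = (D * v powr (D-D0)) * v powr (D0-1)" using split by simp
  also have "\<dots> \<le> D0 * v powr (D0-1)"
    using key by (intro mult_right_mono) auto
  also have "\<dots> \<le> D0 * r powr (D0-1)"
    using vr v0 D01 by (intro mult_left_mono powr_mono2) auto
  finally have num1: "D * v powr (D-1) \<le> D0 * r powr (D0-1)" .
  have xb1: "x^(n-1) \<le> b^(n-1)" using xb x0 by (simp add: power_mono)
  have num: "D * v powr (D-1) * (real n * x^(n-1)) \<le> D0 * r powr (D0-1) * (real n * b^(n-1))"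
    using num1 xb1 x0 r0 D01 by (intro mult_mono[OF num1] mult_left_mono[OF xb1]) auto
  have w1: "v powr D \<le> v powr D0" using DD0 v0 v1 by (intro powr_mono') auto
  have w2: "v powr D0 \<le> r powr D0" using vr v0 D01 by (intro powr_mono2) auto
  have w3: "r powr D0 \<le> 1" using r0 r1 D01 by (intro powr_le1) auto
  have den1: "(2 - r powr D0)^2 \<le> (2 - v powr D)^2"
    using w1 w2 w3 by (intro power_mono) auto
  have den2: "(1 - b^n)^2 \<le> (1 - x^n)^2"
    using yb bn by (intro power_mono) auto
  have dpos: "0 < (2 - r powr D0)^2 * (1-b^n)^2" using w3 bn by simp
  have den: "(2 - r powr D0)^2 * (1-b^n)^2 \<le> (2 - v powr D)^2 * (1-x^n)^2"
    using den1 den2 by (intro mult_mono) auto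
  have "0 \<le> D * v powr (D-1) * (real n * x^(n-1))" using Dpos x0 by simp
  then have "0 \<le> D0 * r powr (D0-1) * (real n * b^(n-1))" using num by linarith
  then show ?thesis using v0 v1 frac_le[OF _ num dpos den] by simp
qed

lemma reduce:
  fixes k :: nat and d x a b r Dz :: real
  assumes k3: "k \<ge> 3" and a0: "0 < a" and ax: "a \<le> x" and xb: "x \<le> b"
    and bn: "b ^ (k-1) < 1/2"
    and ar: "(1 - 2 * a^(k-1)) / (1 - a^(k-1)) \<le> r" and r1: "r < 1"
    and Dz1: "1 \<le> Dz" and DDz: "Dz \<le> d - 1" and rDz: "1 / Dz \<le> 1 - r"
    and B: "Dz * r powr (Dz-1) * (real (k-1) * b^(k-1-1)) / ((2 - r powr Dz)^2 * (1-b^(k-1))^2) < 1"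
  shows "Psi k d differentiable (at x) \<and> \<bar>deriv (Psi k d) x\<bar> < 1"
proof -
  define v where "v = Psi_hat k x"
  have vdef: "v = (1 - 2 * x^(k-1)) / (1 - x^(k-1))" unfolding v_def Psi_hat_def ..
  have c: "0 < v \<and> v < 1 \<and>
    (d-1) * v powr (d-1-1) * (real (k-1) * x^(k-1-1)) / ((2 - v powr (d-1))^2 * (1-x^(k-1))^2)
    \<le> Dz * r powr (Dz-1) * (real (k-1) * b^(k-1-1)) / ((2 - r powr Dz)^2 * (1-b^(k-1))^2)"
    by (rule core_bound[OF _ a0 ax xb bn ar r1 Dz1 DDz rDz vdef]) (use k3 in simp)
  have x0: "0 < x" using a0 ax by simp
  have "x^(k-1) \<le> b^(k-1)" using xb x0 by (simp add: power_mono)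
  then have xn: "x^(k-1) \<noteq> 1" using bn by auto
  have d1: "1 \<le> d" using Dz1 DDz by simp
  have h1: "(Psi_hat k has_real_derivative
           - (real (k-1) * x ^ (k-1-1)) / (1 - x^(k-1))^2) (at x)"
    by (rule Psi_hat_deriv[OF xn])
  have h2: "(Psi_dot d has_real_derivative
           - ((d-1) * v powr (d-1-1)) / (2 - v powr (d-1))^2) (at (Psi_hat k x))"
    using Psi_dot_deriv[of v d] c d1 unfolding v_def by simp
  define Dv where "Dv = (- ((d-1) * v powr (d-1-1)) / (2 - v powr (d-1))^2) *
       (- (real (k-1) * x ^ (k-1-1)) / (1 - x^(k-1))^2)"
  have hd: "(Psi k d has_real_derivative Dv) (at x)"
    unfolding Psi_def Dv_def using DERIV_chain[OF h2 h1] by simp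
  have Dveq: "Dv = (d-1) * v powr (d-1-1) * (real (k-1) * x^(k-1-1)) / ((2 - v powr (d-1))^2 * (1-x^(k-1))^2)"
    unfolding Dv_def by (simp only: minus_divide_left[symmetric] mult_minus_left mult_minus_right minus_minus times_divide_times_eq mult_ac)
  have "0 \<le> Dv" unfolding Dveq using d1 x0 by simp
  moreover have "Dv < 1" using c B Dveq by linarith
  ultimately have "\<bar>Dv\<bar> < 1" by simp
  moreover have "deriv (Psi k d) x = Dv" by (rule DERIV_imp_deriv[OF hd])
  moreover have "Psi k d differentiable (at x)"
    using hd real_differentiable_def by blast
  ultimately show ?thesis by simp
qed


lemma reduce2:
  fixes k :: nat and d x a b r Dz c :: real
  assumes k3: "k \<ge> 3" and a0: "0 < a" and ax: "a \<le> x" and xb: "x \<le> b"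
    and bn: "b ^ (k-1) < 1/2"
    and ar: "(1 - 2 * a^(k-1)) / (1 - a^(k-1)) \<le> r" and r1: "r < 1"
    and D01: "1 \<le> Dz" and DD0: "Dz \<le> d - 1" and rD0: "1 / Dz \<le> 1 - r"
    and rc: "r powr (Dz - 1) \<le> c" and c1: "c \<le> 1"
    and B: "Dz * c * (real (k-1) * b^(k-1-1)) / ((2 - c)^2 * (1-b^(k-1))^2) < 1"
  shows "Psi k d differentiable (at x) \<and> \<bar>deriv (Psi k d) x\<bar> < 1"
proof (rule reduce[OF k3 a0 ax xb bn ar r1 D01 DD0 rD0])
  have x0: "0 < x" using a0 ax by simp
  have bpos: "0 < b" using x0 xb by simp
  have yb: "x^(k-1) \<le> b^(k-1)" using xb x0 by (simp add: power_mono)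
  have "a^(k-1) \<le> b^(k-1)" using a0 ax xb by (intro power_mono) auto
  then have "0 < (1 - 2 * a^(k-1)) / (1 - a^(k-1))" using bn by (intro divide_pos_pos) auto
  then have r0: "0 < r" using ar by linarith
  have w1: "r powr Dz \<le> r powr (Dz - 1)" using r0 r1 by (intro powr_mono') auto
  have w3: "r powr Dz \<le> 1" using r0 r1 D01 by (intro powr_le1) auto
  have c0: "0 \<le> r powr (Dz - 1)" by simp
  have T0: "0 \<le> real (k-1) * b^(k-1-1)" using bpos by simp
  have num: "Dz * r powr (Dz-1) * (real (k-1) * b^(k-1-1)) \<le> Dz * c * (real (k-1) * b^(k-1-1))"
    using rc D01 T0 by (intro mult_right_mono mult_left_mono) auto
  have S0: "0 < (1-b^(k-1))^2" using bn by simp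
  have c1: "c < 2" using c1 by simp
  have den: "(2 - c)^2 * (1-b^(k-1))^2 \<le> (2 - r powr Dz)^2 * (1-b^(k-1))^2"
    using w1 rc w3 c1 S0 by (intro mult_right_mono power_mono) auto
  have dpos: "0 < (2 - c)^2 * (1-b^(k-1))^2" using c1 S0 by simp
  have "0 \<le> Dz * c * (real (k-1) * b^(k-1-1))" using num c0 D01 T0 by (meson order_trans mult_nonneg_nonneg zero_le_one)
  then have "Dz * r powr (Dz-1) * (real (k-1) * b^(k-1-1)) / ((2 - r powr Dz)^2 * (1-b^(k-1))^2)
     \<le> Dz * c * (real (k-1) * b^(k-1-1)) / ((2 - c)^2 * (1-b^(k-1))^2)"
    by (rule frac_le[OF _ num dpos den])
  then show "Dz * r powr (Dz-1) * (real (k-1) * b^(k-1-1)) / ((2 - r powr Dz)^2 * (1-b^(k-1))^2) < 1"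
    using B by linarith
qed


lemma poly1: "6 \<le> n \<Longrightarrow> 8*(n+1)*(n+2) \<le> 7*(2::nat)^n"
proof (induction n rule: nat_induct_at_least)
  case base
  then show ?case by simp
next
  case (Suc n)
  have "n+3 \<le> 2*(n+1)" using Suc.hyps by simp
  then have "(8*(n+2))*(n+3) \<le> (8*(n+2))*(2*(n+1))" by (rule mult_le_mono2)
  then have "8*(Suc n+1)*(Suc n+2) \<le> 2*(8*(n+1)*(n+2))" by (simp add: algebra_simps)
  also have "\<dots> \<le> 2*(7*2^n)" using Suc.IH by simp
  finally show ?case by simp
qed

lemma poly2: "6 \<le> n \<Longrightarrow> 64*n*(n+1) \<le> 42*(2::nat)^n"
proof (induction n rule: nat_induct_at_least)
  case base
  then show ?case by simp
next
  case (Suc n)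
  have "n+2 \<le> 2*n" using Suc.hyps by simp
  then have "(64*(n+1))*(n+2) \<le> (64*(n+1))*(2*n)" by (rule mult_le_mono2)
  then have "64*Suc n*(Suc n+1) \<le> 2*(64*n*(n+1))" by (simp add: algebra_simps)
  also have "\<dots> \<le> 2*(42*2^n)" using Suc.IH by simp
  finally show ?case by simp
qed

lemma caseGen:
  fixes k :: nat and d x :: real
  assumes k7: "k \<ge> 7" and dl: "d_lbd k \<le> d"
    and xa: "1/2 - 1/2^k \<le> x" and xb: "x \<le> 1/2"
  shows "Psi k d differentiable (at x) \<and> \<bar>deriv (Psi k d) x\<bar> < 1"
proof -
  define n where "n = k - 1"
  have kn: "k = Suc n" using k7 unfolding n_def by simp
  have n6: "6 \<le> n" using k7 unfolding n_def by simp
  define N :: real where "N = 2^n"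
  define m :: real where "m = real n"
  define L where "L = ln (2::real)"
  have L1: "2/3 \<le> L" "L < 1" unfolding L_def using ln2_ge_two_thirds ln_2_less_1 by auto
  have "(2::real)^6 \<le> 2^n" using n6 by (intro power_increasing) auto
  then have N64: "64 \<le> N" unfolding N_def by simp
  have p1: "8*(m+1)*(m+2) \<le> 7*N"
    using poly1[OF n6] unfolding m_def N_def by (metis (mono_tags) of_nat_le_iff of_nat_mult of_nat_add of_nat_numeral of_nat_1 of_nat_power)
  have p2: "64*m*(m+1) \<le> 42*N"
    using poly2[OF n6] unfolding m_def N_def by (metis (mono_tags) of_nat_le_iff of_nat_mult of_nat_add of_nat_numeral of_nat_1 of_nat_power)
  have m6: "6 \<le> m" using n6 unfolding m_def by simp
  have dlk: "d_lbd k = (N - 2) * (m+1) * L"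
    unfolding d_lbd_def N_def m_def L_def using k7 kn by simp
  define a :: real where "a = 1/2 - 1/2^k"
  have aeq: "a = (1 - 1/N) / 2" unfolding a_def N_def kn by (simp add: field_simps)
  have an: "a^n = (1 - 1/N)^n / N" unfolding aeq N_def by (simp add: power_divide)
  define Y where "Y = (1 - m/N) / N"
  have "1 + m * (- (1/N)) \<le> (1 + - (1/N))^n"
    unfolding m_def using N64 by (intro Bernoulli_inequality) (simp add: field_simps)
  then have Yan: "Y \<le> a^n" unfolding Y_def an using N64 by (simp add: divide_right_mono)
  have "m * 448 \<le> m * (64*(m+1))" using m6 by (intro mult_left_mono) auto
  then have "448 * m \<le> 64*m*(m+1)" by (simp add: algebra_simps)
  then have "448 * m \<le> 42 * N" using p2 by linarith
  then have mN: "2 * m \<le> N" using m6 N64 by linarith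
  have Y2: "1 / (2*N) \<le> Y" unfolding Y_def using mN N64 by (simp add: field_simps)
  have a0: "0 < a" unfolding aeq using N64 by simp
  have ahalf: "a \<le> 1/2" unfolding aeq using N64 by simp
  have an1: "a^n \<le> (1/2)^n" using a0 ahalf by (intro power_mono) auto
  have half_n: "(1/2::real)^n = 1/N" unfolding N_def by (simp add: power_divide)
  have "1/N \<le> 1/64" using N64 by (intro divide_left_mono) auto
  then have an2: "a^n < 1/2" using an1 half_n by simp
  have an0: "0 < a^n" using a0 by simp
  define r where "r = (1 - 2 * a^n) / (1 - a^n)"
  have r1eq: "1 - r = a^n / (1 - a^n)" unfolding r_def using an2 by (simp add: field_simps)
  have "a^n \<le> a^n / (1 - a^n)" using an0 an2 by (simp add: field_simps)
  then have Yr: "Y \<le> 1 - r" using Yan r1eq by simp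
  have r0: "0 < r" unfolding r_def using an2 by simp
  have "0 < a^n / (1 - a^n)" using an0 an2 by (intro divide_pos_pos) auto
  then have r1: "r < 1" using r1eq by simp
  define Dz where "Dz = (N - 2) * (m+1) * L - 1"
  have "(N-2) * 7 * (2/3) \<le> (N - 2) * (m+1) * L"
    using N64 m6 L1 by (intro mult_mono) auto
  then have Dz2N: "2 * N \<le> Dz" unfolding Dz_def using N64 by simp
  have D01: "1 \<le> Dz" using Dz2N N64 by simp
  have DD0: "Dz \<le> d - 1" using dl dlk unfolding Dz_def by simp
  have "1 / Dz \<le> 1 / (2*N)" using Dz2N N64 by (intro divide_left_mono) auto
  then have rD0: "1 / Dz \<le> 1 - r" using Y2 Yr by simp
  have key: "m * L \<le> (Dz - 1) * Y"
  proof -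
    have "L * (8*(m+1)*(m+2)) \<le> L * (7*N)" using p1 L1 by (intro mult_left_mono) auto
    then have h1: "L*(m+1)*(m+2) \<le> 7*L*N/8" by (simp add: algebra_simps)
    have "(2/3) * 64 \<le> L * N" using L1 N64 by (intro mult_mono) auto
    then have h2: "2 \<le> L*N/8" by simp
    have h3: "0 \<le> L*N - L*(m+1)*(m+2) - 2" using h1 h2 by linarith
    have eq: "((N-2)*(m+1)*L - 2)*(N-m) - m*L*N^2 = N*(L*N - L*(m+1)*(m+2) - 2) + 2*L*m*(m+1) + 2*m"
      by (simp add: algebra_simps power2_eq_square)
    have "0 \<le> N*(L*N - L*(m+1)*(m+2) - 2)" using h3 N64 by simp
    moreover have "0 \<le> 2*L*m*(m+1)" using L1 m6 by simp
    ultimately have "m*L*N^2 \<le> ((N-2)*(m+1)*L - 2)*(N-m)" using eq m6 by linarith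
    then have "m*L*N^2 / N^2 \<le> ((N-2)*(m+1)*L - 2)*(N-m) / N^2"
      using N64 by (intro divide_right_mono) auto
    moreover have "(Dz - 1) * Y = ((N-2)*(m+1)*L - 2)*(N-m) / N^2"
      unfolding Dz_def Y_def using N64 by (simp add: field_simps power2_eq_square)
    ultimately show ?thesis using N64 by simp
  qed
  have rc: "r powr (Dz - 1) \<le> 1 / N"
  proof -
    have "ln r \<le> r - 1" by (rule ln_le_minus_one[OF r0])
    then have "(Dz - 1) * ln r \<le> (Dz - 1) * (- Y)"
      using Yr D01 by (intro mult_left_mono) auto
    also have "\<dots> \<le> - (m * L)" using key by simp
    finally have "r powr (Dz - 1) \<le> exp (- (m * L))"
      using r0 by (simp add: powr_def mult.commute)
    also have "exp (- (m * L)) = 1 / N"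
      unfolding m_def L_def N_def by (simp add: exp_minus exp_of_nat_mult inverse_eq_divide)
    finally show ?thesis .
  qed
  have B: "Dz * (1/N) * (real (k-1) * (1/2)^(k-1-1)) / ((2 - 1/N)^2 * (1-(1/2)^(k-1))^2) < 1"
  proof -
    have "(1/2::real)^(n-1) * (1/2) = (1/2)^n" using n6 by (intro power_minus_mult) simp
    then have e1: "(1/2::real)^(n-1) = 2 / N" using half_n N64 by (simp add: field_simps)
    have kk: "k - 1 = n" "k - 1 - 1 = n - 1" unfolding n_def by simp_all
    have Dzle: "Dz \<le> N * (m+1)"
    proof -
      have "(N - 2) * (m+1) * L \<le> (N - 2) * (m+1) * 1"
        using L1 N64 m6 by (intro mult_left_mono) auto
      moreover have "(N-2)*(m+1) \<le> N*(m+1)" using m6 by (intro mult_right_mono) auto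
      ultimately show ?thesis unfolding Dz_def by simp
    qed
    have Dz0: "0 \<le> Dz" using D01 by simp
    have "Dz * (1/N) * (m * (2/N)) \<le> N * (m+1) * (1/N) * (m * (2/N))"
      using Dzle N64 m6 by (intro mult_right_mono) auto
    also have "\<dots> = 2*m*(m+1)/N" using N64 by (simp add: field_simps)
    also have "\<dots> \<le> 21/16" using p2 N64 by (simp add: field_simps)
    finally have num: "Dz * (1/N) * (m * (2/N)) \<le> 21/16" .
    have q1: "3/2 \<le> 2 - 1/N" using N64 by (simp add: field_simps)
    have q2: "63/64 \<le> 1 - 1/N" using N64 by (simp add: field_simps)
    have "(3/2)^2 * (63/64)^2 \<le> (2 - 1/N)^2 * (1 - 1/N)^2"
      using q1 q2 by (intro mult_mono power_mono) auto
    then have den: "2 \<le> (2 - 1/N)^2 * (1 - 1/N)^2" by (simp add: power2_eq_square)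
    have "Dz * (1/N) * (m * (2/N)) / ((2 - 1/N)^2 * (1 - 1/N)^2) \<le> (21/16) / 2"
      using num den Dz0 N64 m6 by (intro frac_le) auto
    then show ?thesis unfolding kk e1 half_n m_def by simp
  qed
  show ?thesis
    apply (rule reduce2[where a=a and b="1/2" and r=r and Dz=Dz and c="1/N"])
    using k7 a0 xa xb an2 r1 D01 DD0 rD0 rc B N64
    unfolding a_def[symmetric] r_def n_def[symmetric] half_n
    by auto
qed

lemma case4:
  fixes d x :: real
  assumes "16.7 \<le> d" and "7/16 \<le> x" and "x \<le> 1/2"
  shows "Psi 4 d differentiable (at x) \<and> \<bar>deriv (Psi 4 d) x\<bar> < 1"
proof -
  have D: "(15::real) \<le> d - 1" using assms(1) by simp
  consider "x \<le> 29/64" | "29/64 \<le> x" "x \<le> 30/64" | "30/64 \<le> x" "x \<le> 31/64" | "31/64 \<le> x"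
    by linarith
  then show ?thesis
  proof cases
    case 1
    show ?thesis
      by (rule reduce[where a="7/16" and b="29/64" and r="909/1000" and Dz=15])
         (use assms 1 D in \<open>simp_all add: powr_numeral power_divide\<close>)
  next
    case 2
    show ?thesis
      by (rule reduce[where a="29/64" and b="30/64" and r="449/500" and Dz=15])
         (use assms 2 D in \<open>simp_all add: powr_numeral power_divide\<close>)
  next
    case 3
    show ?thesis
      by (rule reduce[where a="30/64" and b="31/64" and r="443/500" and Dz=15])
         (use assms 3 D in \<open>simp_all add: powr_numeral power_divide\<close>)
  next
    case 4
    show ?thesis
      by (rule reduce[where a="31/64" and b="1/2" and r="109/125" and Dz=15])
         (use assms 4 D in \<open>simp_all add: powr_numeral power_divide\<close>)
  qed
qed

lemma case5:
  fixes d x :: real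
  assumes "d_lbd 5 \<le> d" and "15/32 \<le> x" and "x \<le> 1/2"
  shows "Psi 5 d differentiable (at x) \<and> \<bar>deriv (Psi 5 d) x\<bar> < 1"
proof -
  have "d_lbd 5 = 70 * ln 2" by (simp add: d_lbd_def)
  then have D: "(45::real) \<le> d - 1" using assms(1) ln2_ge_two_thirds by simp
  show ?thesis
    by (rule reduce[where a="15/32" and b="1/2" and r="19/20" and Dz=45])
       (use assms D in \<open>simp_all add: powr_numeral power_divide\<close>)
qed

lemma case6:
  fixes d x :: real
  assumes "d_lbd 6 \<le> d" and "31/64 \<le> x" and "x \<le> 1/2"
  shows "Psi 6 d differentiable (at x) \<and> \<bar>deriv (Psi 6 d) x\<bar> < 1"
proof -
  have "d_lbd 6 = 180 * ln 2" by (simp add: d_lbd_def)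
  then have D: "(119::real) \<le> d - 1" using assms(1) ln2_ge_two_thirds by simp
  show ?thesis
  proof (rule reduce2[where a="31/64" and b="1/2" and r="36/37" and Dz=119 and c="(81/100)^14"])
    have "(36/37::real) powr (119 - 1) = (36/37)^112 * (36/37)^6"
      by (simp add: powr_numeral power_add[symmetric])
    also have "\<dots> \<le> (36/37)^112" by (rule mult_left_le) (auto simp: power_le_one)
    also have "(36/37::real)^112 = ((36/37)^8)^14" by (simp add: power_mult[symmetric])
    also have "\<dots> \<le> (81/100)^14"
      by (rule power_mono) (simp_all add: power_divide)
    finally show "(36/37::real) powr (119 - 1) \<le> (81/100)^14" .
  qed (use assms D in \<open>simp_all add: powr_numeral power_divide\<close>)
qed

theorem lemma3p3:
  fixes k :: nat and d x :: real
  assumes "k \<ge> 4"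
    and "d_lbd k \<le> d" and "d \<le> d_ubd k"
    and "1/2 - 1/2^k \<le> x" and "x \<le> 1/2"
  shows "Psi k d differentiable (at x) \<and> \<bar>deriv (Psi k d) x\<bar> < 1"
proof -
  consider "k = 4" | "k = 5" | "k = 6" | "k \<ge> 7" using assms(1) by linarith
  then show ?thesis
  proof cases
    case 1
    then show ?thesis using case4[of d x] assms by (simp add: d_lbd_def)
  next
    case 2
    then show ?thesis using case5[of d x] assms by simp
  next
    case 3
    then show ?thesis using case6[of d x] assms by simp
  next
    case 4
    then show ?thesis using caseGen[of k d x] assms by simp
  qed
qed

end
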